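(* There is an absolute constant $d$ such that for every finite simple digraph $H$, every positive integer $k$, and every tournament $T$ that does not contain $k$ pairwise arc-disjoint immersion copies of $H$, we have $\mathrm{ctw}(T)\le d\,\|H\|^2k^2$.
   Context: All digraphs are finite and simple; $\|H\|:=|V(H)|+|A(H)|$. A tournament is a simple digraph with exactly one arc between every pair of distinct vertices. An immersion copy of $H$ in $T$ is a subgraph $\widehat H$ of $T$ together with a map sending vertices of $H$ to distinct vertices of $\widehat H$ and arcs $(u,v)$ of $H$ to directed paths from the image of $u$ to the image of $v$, such that every arc of $\widehat H$ lies on exactly one of these paths. For an ordering $\sigma:V(T)\to[|V(T)|]$ (a bijection) and $\alpha\in\{0,\dots,|V(T)|\}$, the $\alpha$-cut is the set of arcs $(u,v)$ with $\sigma(u)>\alpha\ge\sigma(v)$; the width of $\sigma$ is the maximum size of an $\alpha$-cut over all $\alpha$, and the cutwidth $\mathrm{ctw}(T)$ is the minimum width over all orderings. *)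

theory Defs
  imports Complex_Main
begin

text \<open>A finite simple digraph: vertex set V, arc set A of ordered pairs, no loops.
  (A set of ordered pairs excludes parallel arcs.)\<close>
definition simple_digraph :: "'a set \<Rightarrow> ('a \<times> 'a) set \<Rightarrow> bool" where
  "simple_digraph V A \<longleftrightarrow> finite V \<and> A \<subseteq> V \<times> V \<and> (\<forall>v. (v, v) \<notin> A)"

definition tournament :: "'a set \<Rightarrow> ('a \<times> 'a) set \<Rightarrow> bool" where
  "tournament V A \<longleftrightarrow> simple_digraph V A \<and>
     (\<forall>u\<in>V. \<forall>v\<in>V. u \<noteq> v \<longrightarrow> ((u, v) \<in> A \<longleftrightarrow> (v, u) \<notin> A))"

definition size_dg :: "'a set \<Rightarrow> ('a \<times> 'a) set \<Rightarrow> nat" where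
  "size_dg V A = card V + card A"

definition path_arcs :: "'a list \<Rightarrow> ('a \<times> 'a) set" where
  "path_arcs xs = set (zip xs (tl xs))"

definition dpath :: "('a \<times> 'a) set \<Rightarrow> 'a list \<Rightarrow> 'a \<Rightarrow> 'a \<Rightarrow> bool" where
  "dpath B xs s t \<longleftrightarrow> xs \<noteq> [] \<and> hd xs = s \<and> last xs = t \<and> distinct xs \<and>
     path_arcs xs \<subseteq> B"

definition immersion_copy ::
  "'a set \<Rightarrow> ('a \<times> 'a) set \<Rightarrow> 'b set \<Rightarrow> ('b \<times> 'b) set \<Rightarrow>
   'b set \<Rightarrow> ('b \<times> 'b) set \<Rightarrow> ('a \<Rightarrow> 'b) \<Rightarrow> ('a \<times> 'a \<Rightarrow> 'b list) \<Rightarrow> bool" where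
  "immersion_copy VH AH VT AT W B phi P \<longleftrightarrow>
     W \<subseteq> VT \<and> B \<subseteq> AT \<and> B \<subseteq> W \<times> W \<and>
     inj_on phi VH \<and> phi ` VH \<subseteq> W \<and>
     (\<forall>e\<in>AH. set (P e) \<subseteq> W \<and> dpath B (P e) (phi (fst e)) (phi (snd e))) \<and>
     (\<forall>b\<in>B. \<exists>!e. e \<in> AH \<and> b \<in> path_arcs (P e))"

definition has_disjoint_immersions ::
  "nat \<Rightarrow> 'a set \<Rightarrow> ('a \<times> 'a) set \<Rightarrow> 'b set \<Rightarrow> ('b \<times> 'b) set \<Rightarrow> bool" where
  "has_disjoint_immersions k VH AH VT AT \<longleftrightarrow>
     (\<exists>Ws Bs phis Ps. (\<forall>i<k. immersion_copy VH AH VT AT (Ws i) (Bs i) (phis i) (Ps i)) \<and>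
        (\<forall>i<k. \<forall>j<k. i \<noteq> j \<longrightarrow> Bs i \<inter> Bs j = {}))"

definition cut_at :: "('a \<times> 'a) set \<Rightarrow> ('a \<Rightarrow> nat) \<Rightarrow> nat \<Rightarrow> ('a \<times> 'a) set" where
  "cut_at A \<sigma> \<alpha> = {(u, v) \<in> A. \<sigma> u > \<alpha> \<and> \<alpha> \<ge> \<sigma> v}"

definition ordering_width :: "'a set \<Rightarrow> ('a \<times> 'a) set \<Rightarrow> ('a \<Rightarrow> nat) \<Rightarrow> nat" where
  "ordering_width V A \<sigma> = Max ((\<lambda>\<alpha>. card (cut_at A \<sigma> \<alpha>)) ` {0..card V})"

definition cutwidth :: "'a set \<Rightarrow> ('a \<times> 'a) set \<Rightarrow> nat" where
  "cutwidth V A = Min {ordering_width V A \<sigma> | \<sigma>. bij_betw \<sigma> V {1..card V}}"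

end

theory Submission
  imports Defs
begin


lemma path_arcs_Cons2: "path_arcs (a # b # xs) = insert (a, b) (path_arcs (b # xs))"
  by (simp add: path_arcs_def)

lemma path_arcs_single[simp]: "path_arcs [a] = {}" and path_arcs_Nil[simp]: "path_arcs [] = {}"
  by (simp_all add: path_arcs_def)

lemma path_arcs_append:
  "path_arcs (xs @ ys) = path_arcs xs \<union> path_arcs ys \<union>
     (if xs = [] \<or> ys = [] then {} else {(last xs, hd ys)})"
proof (induction xs)
  case Nil then show ?case by simp
next
  case (Cons a xs)
  show ?case
  proof (cases xs)
    case Nil
    then show ?thesis by (cases ys) (auto simp: path_arcs_Cons2)
  next
    case (Cons b zs)
    then show ?thesis using Cons.IH by (auto simp: path_arcs_Cons2)
  qed
qed

lemma walk_to_path: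
  "xs \<noteq> [] \<Longrightarrow> \<exists>ys. ys \<noteq> [] \<and> distinct ys \<and> hd ys = hd xs \<and> last ys = last xs \<and>
      path_arcs ys \<subseteq> path_arcs xs \<and> length ys \<le> length xs"
proof (induction "length xs" arbitrary: xs rule: less_induct)
  case less
  show ?case
  proof (cases "distinct xs")
    case True then show ?thesis using less.prems by blast
  next
    case False
    then obtain as y bs cs where xs: "xs = as @ [y] @ bs @ [y] @ cs"
      using not_distinct_decomp by blast
    let ?xs' = "as @ [y] @ cs"
    have len: "length ?xs' < length xs" using xs by simp
    have ne: "?xs' \<noteq> []" by simp
    have hd': "hd ?xs' = hd xs" using xs by (cases as) auto
    have last': "last ?xs' = last xs" using xs by (cases cs) auto
    have h: "path_arcs (y # cs) \<subseteq> path_arcs (y # bs @ y # cs)"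
      using path_arcs_append[of "y # bs" "y # cs"] by auto
    have sub: "path_arcs ?xs' \<subseteq> path_arcs xs"
      unfolding xs using h path_arcs_append[of as "y # cs"] path_arcs_append[of as "y # bs @ y # cs"]
      by (auto split: if_splits)
    from less.hyps[OF len ne] obtain ys where
      "ys \<noteq> [] \<and> distinct ys \<and> hd ys = hd ?xs' \<and> last ys = last ?xs' \<and>
       path_arcs ys \<subseteq> path_arcs ?xs' \<and> length ys \<le> length ?xs'" by blast
    then show ?thesis using hd' last' sub len by (metis order.trans less_imp_le)
  qed
qed

lemma card_path_arcs: "card (path_arcs ys) \<le> length ys - 1"
  unfolding path_arcs_def using card_length[of "zip ys (tl ys)"] by simp

lemma set_path_sub: "xs \<noteq> [] \<Longrightarrow> set xs \<subseteq> insert (hd xs) (snd ` path_arcs xs)"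
proof (induction xs)
  case Nil then show ?case by simp
next
  case (Cons a xs)
  show ?case
  proof (cases xs)
    case Nil then show ?thesis by simp
  next
    case (Cons b zs)
    then have "set (a # xs) = insert a (set (b # zs))" by simp
    moreover have "set (b # zs) \<subseteq> insert b (snd ` path_arcs (b # zs))" using Cons.IH Cons by simp
    moreover have "path_arcs (a # xs) = insert (a, b) (path_arcs (b # zs))" using Cons by (simp add: path_arcs_Cons2)
    ultimately show ?thesis by auto
  qed
qed

definition robust :: "('a \<times> 'a) set \<Rightarrow> 'a set \<Rightarrow> nat \<Rightarrow> bool" where
  "robust A X R \<longleftrightarrow> (\<forall>x\<in>X. \<forall>y\<in>X. x \<noteq> y \<longrightarrow> (\<forall>Z. finite Z \<longrightarrow> card Z \<le> R \<longrightarrow>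
     (\<exists>xs. xs \<noteq> [] \<and> hd xs = x \<and> last xs = y \<and> length xs \<le> 5 \<and> path_arcs xs \<subseteq> A - Z)))"

lemma route:
  fixes src tgt :: "'d \<Rightarrow> 'a"
  assumes rob: "robust A X R" and fin: "finite D"
    and card: "4 * card D \<le> R"
    and st: "\<forall>d\<in>D. src d \<in> X \<and> tgt d \<in> X \<and> src d \<noteq> tgt d"
  shows "\<exists>p. (\<forall>d\<in>D. dpath A (p d) (src d) (tgt d) \<and> card (path_arcs (p d)) \<le> 4) \<and>
     (\<forall>d\<in>D. \<forall>d'\<in>D. d \<noteq> d' \<longrightarrow> path_arcs (p d) \<inter> path_arcs (p d') = {})"
  using fin card st
proof (induction D rule: finite_induct)
  case empty then show ?case by simp
next
  case (insert d F)
  from insert.prems have cF: "4 * card F \<le> R" using insert.hyps by simp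
  from insert.IH[OF cF] insert.prems obtain p where
    p1: "\<forall>d\<in>F. dpath A (p d) (src d) (tgt d) \<and> card (path_arcs (p d)) \<le> 4"
    and p2: "\<forall>d\<in>F. \<forall>d'\<in>F. d \<noteq> d' \<longrightarrow> path_arcs (p d) \<inter> path_arcs (p d') = {}" by auto
  define Z where "Z = (\<Union>d'\<in>F. path_arcs (p d'))"
  have finZ: "finite Z" unfolding Z_def path_arcs_def using insert.hyps by auto
  have "card Z \<le> (\<Sum>d'\<in>F. card (path_arcs (p d')))" unfolding Z_def by (rule card_UN_le[OF insert.hyps(1)])
  also have "\<dots> \<le> (\<Sum>d'\<in>F. 4)" using p1 by (intro sum_mono) auto
  finally have cZ: "card Z \<le> R" using cF by simp
  have sd: "src d \<in> X" "tgt d \<in> X" "src d \<noteq> tgt d" using insert.prems by auto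
  obtain xs where xs: "xs \<noteq> []" "hd xs = src d" "last xs = tgt d" "length xs \<le> 5" "path_arcs xs \<subseteq> A - Z"
    using rob sd finZ cZ unfolding robust_def by blast
  obtain ys where ys: "ys \<noteq> []" "distinct ys" "hd ys = src d" "last ys = tgt d"
     "path_arcs ys \<subseteq> A - Z" "length ys \<le> 5"
    using walk_to_path[OF xs(1)] xs by (metis order.trans)
  have cys: "card (path_arcs ys) \<le> 4" using card_path_arcs[of ys] ys(6) by simp
  define p' where "p' = p(d := ys)"
  have "\<forall>e\<in>insert d F. dpath A (p' e) (src e) (tgt e) \<and> card (path_arcs (p' e)) \<le> 4"
    using p1 ys cys insert.hyps unfolding p'_def dpath_def by auto
  moreover have "\<forall>e\<in>insert d F. \<forall>e'\<in>insert d F. e \<noteq> e' \<longrightarrow> path_arcs (p' e) \<inter> path_arcs (p' e') = {}"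
  proof (intro ballI impI)
    fix e e' assume e: "e \<in> insert d F" "e' \<in> insert d F" "e \<noteq> e'"
    show "path_arcs (p' e) \<inter> path_arcs (p' e') = {}"
    proof (cases "e = d")
      case True
      then have "e' \<in> F" "e' \<noteq> d" using e by auto
      then show ?thesis using True ys(5) insert.hyps unfolding p'_def Z_def by auto
    next
      case False
      note eF = False
      show ?thesis
      proof (cases "e' = d")
        case True
        then have "e \<in> F" using e eF by auto
        then show ?thesis using True eF ys(5) insert.hyps unfolding p'_def Z_def by auto
      next
        case False
        then show ?thesis using eF e p2 unfolding p'_def by auto
      qed
    qed
  qed
  ultimately show ?case by blast
qed

lemma build_immersions:
  fixes VH :: "nat set" and AH :: "(nat \<times> nat) set" and VT :: "nat set" and X :: "nat set"
  assumes sd: "simple_digraph VH AH" and tour: "tournament VT AT"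
    and XV: "X \<subseteq> VT" and finX: "finite X"
    and cX: "k * card VH \<le> card X"
    and rob: "robust AT X R" and cR: "4 * (k * card AH) \<le> R"
  shows "has_disjoint_immersions k VH AH VT AT"
proof -
  have finVH: "finite VH" and AHV: "AH \<subseteq> VH \<times> VH" and noloop: "\<forall>v. (v, v) \<notin> AH"
    using sd unfolding simple_digraph_def by auto
  have finAH: "finite AH" using finite_subset[OF AHV] finVH by simp
  have ATV: "AT \<subseteq> VT \<times> VT" using tour unfolding tournament_def simple_digraph_def by auto
  have "card ({..<k} \<times> VH) \<le> card X" using cX by (simp add: card_cartesian_product)
  then obtain \<psi> where psi: "\<psi> ` ({..<k} \<times> VH) \<subseteq> X" "inj_on \<psi> ({..<k} \<times> VH)"
    using card_le_inj[of "{..<k} \<times> VH" X] finVH finX by auto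
  define D where "D = {..<k} \<times> AH"
  define src where "src = (\<lambda>(i::nat, e::nat \<times> nat). \<psi> (i, fst e))"
  define tgt where "tgt = (\<lambda>(i::nat, e::nat \<times> nat). \<psi> (i, snd e))"
  have finD: "finite D" unfolding D_def using finAH by simp
  have cD: "4 * card D \<le> R" unfolding D_def using cR by (simp add: card_cartesian_product)
  have st: "\<forall>d\<in>D. src d \<in> X \<and> tgt d \<in> X \<and> src d \<noteq> tgt d"
  proof
    fix d assume d: "d \<in> D"
    then obtain i e where de: "d = (i, e)" "i < k" "e \<in> AH" unfolding D_def by auto
    have fe: "fst e \<in> VH" "snd e \<in> VH" using de AHV by auto
    have ne: "fst e \<noteq> snd e" using noloop de(3) by (cases e) auto
    have "\<psi> (i, fst e) \<noteq> \<psi> (i, snd e)"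
      using psi(2) fe de ne unfolding inj_on_def by auto
    then show "src d \<in> X \<and> tgt d \<in> X \<and> src d \<noteq> tgt d"
      using psi(1) fe de unfolding src_def tgt_def by auto
  qed
  obtain p where p1: "\<forall>d\<in>D. dpath AT (p d) (src d) (tgt d) \<and> card (path_arcs (p d)) \<le> 4"
    and p2: "\<forall>d\<in>D. \<forall>d'\<in>D. d \<noteq> d' \<longrightarrow> path_arcs (p d) \<inter> path_arcs (p d') = {}"
    using route[OF rob finD cD st] by blast
  define Ws where "Ws = (\<lambda>i::nat. VT)"
  define Bs where "Bs = (\<lambda>i::nat. \<Union>e\<in>AH. path_arcs (p (i, e)))"
  define phis where "phis = (\<lambda>i::nat. \<lambda>v. \<psi> (i, v))"
  define Ps where "Ps = (\<lambda>i::nat. \<lambda>e. p (i, e))"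
  have copies: "\<forall>i<k. immersion_copy VH AH VT AT (Ws i) (Bs i) (phis i) (Ps i)"
  proof (intro allI impI)
    fix i assume ik: "i < k"
    have dp: "\<And>e. e \<in> AH \<Longrightarrow> dpath AT (p (i, e)) (\<psi> (i, fst e)) (\<psi> (i, snd e))"
      using p1 ik unfolding D_def src_def tgt_def by auto
    have BA: "Bs i \<subseteq> AT" unfolding Bs_def using dp unfolding dpath_def by auto
    have inj: "inj_on (phis i) VH" using psi(2) ik unfolding phis_def inj_on_def by auto
    have img: "phis i ` VH \<subseteq> Ws i" using psi(1) ik XV unfolding phis_def Ws_def by auto
    have paths: "\<forall>e\<in>AH. set (Ps i e) \<subseteq> Ws i \<and> dpath (Bs i) (Ps i e) (phis i (fst e)) (phis i (snd e))"
    proof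
      fix e assume e: "e \<in> AH"
      have d: "dpath AT (p (i, e)) (\<psi> (i, fst e)) (\<psi> (i, snd e))" using dp e .
      have fV: "fst e \<in> VH" using e AHV by auto
      have "\<psi> (i, fst e) \<in> X" using psi(1) ik fV by auto
      then have hdV: "hd (p (i,e)) \<in> VT" using d XV unfolding dpath_def by auto
      have "set (p (i, e)) \<subseteq> insert (hd (p (i,e))) (snd ` path_arcs (p (i,e)))"
        using set_path_sub d unfolding dpath_def by blast
      also have "\<dots> \<subseteq> VT" using hdV d ATV unfolding dpath_def by auto
      finally have s: "set (p (i, e)) \<subseteq> VT" .
      have "path_arcs (p (i, e)) \<subseteq> Bs i" unfolding Bs_def using e by auto
      then show "set (Ps i e) \<subseteq> Ws i \<and> dpath (Bs i) (Ps i e) (phis i (fst e)) (phis i (snd e))"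
        using s d unfolding Ps_def Ws_def phis_def dpath_def by auto
    qed
    have uniq: "\<forall>b\<in>Bs i. \<exists>!e. e \<in> AH \<and> b \<in> path_arcs (Ps i e)"
    proof
      fix b assume "b \<in> Bs i"
      then obtain e where e: "e \<in> AH" "b \<in> path_arcs (p (i, e))" unfolding Bs_def by auto
      show "\<exists>!e. e \<in> AH \<and> b \<in> path_arcs (Ps i e)"
      proof (rule ex1I[of _ e])
        show "e \<in> AH \<and> b \<in> path_arcs (Ps i e)" using e unfolding Ps_def by auto
      next
        fix e' assume e': "e' \<in> AH \<and> b \<in> path_arcs (Ps i e')"
        show "e' = e"
        proof (rule ccontr)
          assume "e' \<noteq> e"
          then have "(i, e') \<noteq> (i, e)" by auto
          moreover have "(i, e') \<in> D" "(i, e) \<in> D" using e e' ik unfolding D_def by auto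
          ultimately have "path_arcs (p (i, e')) \<inter> path_arcs (p (i, e)) = {}" using p2 by blast
          then show False using e e' unfolding Ps_def by auto
        qed
      qed
    qed
    have BW: "Bs i \<subseteq> Ws i \<times> Ws i" using BA ATV unfolding Ws_def by auto
    show "immersion_copy VH AH VT AT (Ws i) (Bs i) (phis i) (Ps i)"
      unfolding immersion_copy_def
      apply (intro conjI)
      subgoal unfolding Ws_def by simp
      subgoal by (rule BA)
      subgoal by (rule BW)
      subgoal by (rule inj)
      subgoal by (rule img)
      subgoal by (rule paths)
      subgoal by (rule uniq)
      done
  qed
  have disj: "\<forall>i<k. \<forall>j<k. i \<noteq> j \<longrightarrow> Bs i \<inter> Bs j = {}"
  proof (intro allI impI)
    fix i j assume ij: "i < k" "j < k" "i \<noteq> j"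
    show "Bs i \<inter> Bs j = {}"
    proof (rule ccontr)
      assume "Bs i \<inter> Bs j \<noteq> {}"
      then obtain b e e' where "e \<in> AH" "e' \<in> AH" "b \<in> path_arcs (p (i, e))" "b \<in> path_arcs (p (j, e'))"
        unfolding Bs_def by auto
      moreover have "(i, e) \<in> D" "(j, e') \<in> D" "(i, e) \<noteq> (j, e')" using calculation ij unfolding D_def by auto
      ultimately show False using p2 by blast
    qed
  qed
  show ?thesis unfolding has_disjoint_immersions_def using copies disj by blast
qed




definition outdeg :: "('a \<times> 'a) set \<Rightarrow> 'a \<Rightarrow> nat" where
  "outdeg A v = card {u. (v, u) \<in> A}"
definition indeg :: "('a \<times> 'a) set \<Rightarrow> 'a \<Rightarrow> nat" where
  "indeg A v = card {u. (u, v) \<in> A}"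
definition outarcs :: "('a \<times> 'a) set \<Rightarrow> 'a set \<Rightarrow> ('a \<times> 'a) set" where
  "outarcs A S = {p \<in> A. fst p \<in> S \<and> snd p \<notin> S}"
definition intarcs :: "('a \<times> 'a) set \<Rightarrow> 'a set \<Rightarrow> ('a \<times> 'a) set" where
  "intarcs A S = {p \<in> A. fst p \<in> S \<and> snd p \<in> S}"

context
  fixes V :: "'a set" and A :: "('a \<times> 'a) set"
  assumes tour: "tournament V A"
begin

lemma finV: "finite V" using tour unfolding tournament_def simple_digraph_def by simp
lemma AV: "A \<subseteq> V \<times> V" using tour unfolding tournament_def simple_digraph_def by simp
lemma noloop: "(v, v) \<notin> A" using tour unfolding tournament_def simple_digraph_def by simp
lemma tot: "u \<in> V \<Longrightarrow> v \<in> V \<Longrightarrow> u \<noteq> v \<Longrightarrow> (u, v) \<in> A \<longleftrightarrow> (v, u) \<notin> A"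
  using tour unfolding tournament_def by blast
lemma tot1: "u \<in> V \<Longrightarrow> v \<in> V \<Longrightarrow> u \<noteq> v \<Longrightarrow> (u, v) \<in> A \<or> (v, u) \<in> A"
  using tot by blast
lemma asym: "(u, v) \<in> A \<Longrightarrow> (v, u) \<notin> A"
proof
  assume a: "(u, v) \<in> A" "(v, u) \<in> A"
  then have "u \<in> V" "v \<in> V" using AV by auto
  moreover have "u \<noteq> v" using a noloop by auto
  ultimately show False using tot a by blast
qed
lemma finA: "finite A" using finite_subset[OF AV] finV by simp

lemma out_sub: "{u. (v, u) \<in> A} \<subseteq> V" using AV by auto
lemma in_sub: "{u. (u, v) \<in> A} \<subseteq> V" using AV by auto

lemma deg_sum: assumes "v \<in> V" shows "outdeg A v + indeg A v = card V - 1"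
proof -
  have "{u. (v, u) \<in> A} \<union> {u. (u, v) \<in> A} = V - {v}"
    using AV noloop tot1 assms by blast
  moreover have "{u. (v, u) \<in> A} \<inter> {u. (u, v) \<in> A} = {}"
    using asym by blast
  moreover have "finite {u. (v, u) \<in> A}" "finite {u. (u, v) \<in> A}"
    using finite_subset[OF out_sub finV] finite_subset[OF in_sub finV] by simp_all
  ultimately have "outdeg A v + indeg A v = card (V - {v})"
    unfolding outdeg_def indeg_def by (metis card_Un_disjoint)
  then show ?thesis using assms finV by simp
qed

lemma T2: assumes "S \<subseteq> V"
  shows "(\<Sum>v\<in>S. outdeg A v) = card (intarcs A S) + card (outarcs A S)"
proof -
  have finS: "finite S" using finite_subset[OF assms finV] .
  have "{p \<in> A. fst p \<in> S} = Sigma S (\<lambda>v. {u. (v, u) \<in> A})" by auto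
  then have "card {p \<in> A. fst p \<in> S} = (\<Sum>v\<in>S. card {u. (v, u) \<in> A})"
  proof -
    have "\<forall>v\<in>S. finite {u. (v, u) \<in> A}" using finite_subset[OF out_sub finV] by simp
    then show ?thesis using finS \<open>{p \<in> A. fst p \<in> S} = Sigma S (\<lambda>v. {u. (v, u) \<in> A})\<close> by simp
  qed
  moreover have "{p \<in> A. fst p \<in> S} = intarcs A S \<union> outarcs A S"
    unfolding intarcs_def outarcs_def by auto
  moreover have "intarcs A S \<inter> outarcs A S = {}" unfolding intarcs_def outarcs_def by auto
  moreover have "finite (intarcs A S)" "finite (outarcs A S)"
    unfolding intarcs_def outarcs_def using finA by auto
  ultimately show ?thesis unfolding outdeg_def by (metis card_Un_disjoint)
qed

lemma T3: assumes "S \<subseteq> V" shows "2 * card (intarcs A S) = card S * (card S - 1)"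
proof -
  have finS: "finite S" using finite_subset[OF assms finV] .
  show ?thesis using finS assms
  proof (induction S rule: finite_subset_induct')
    case empty then show ?case unfolding intarcs_def by simp
  next
    case (insert a F)
    define E where "E = (\<lambda>b. (a, b)) ` {b \<in> F. (a, b) \<in> A} \<union> (\<lambda>b. (b, a)) ` {b \<in> F. (b, a) \<in> A}"
    have finF: "finite F" using insert by simp
    have eq: "intarcs A (insert a F) = intarcs A F \<union> E"
      unfolding intarcs_def E_def using noloop by auto
    have disj: "intarcs A F \<inter> E = {}" unfolding intarcs_def E_def using insert.hyps by auto
    have c1: "card ((\<lambda>b. (a, b)) ` {b \<in> F. (a, b) \<in> A}) = card {b \<in> F. (a, b) \<in> A}"
      by (rule card_image) (auto simp: inj_on_def)
    have c2: "card ((\<lambda>b. (b, a)) ` {b \<in> F. (b, a) \<in> A}) = card {b \<in> F. (b, a) \<in> A}"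
      by (rule card_image) (auto simp: inj_on_def)
    have d12: "(\<lambda>b. (a, b)) ` {b \<in> F. (a, b) \<in> A} \<inter> (\<lambda>b. (b, a)) ` {b \<in> F. (b, a) \<in> A} = {}"
      using insert.hyps by auto
    have "{b \<in> F. (a, b) \<in> A} \<union> {b \<in> F. (b, a) \<in> A} = F"
      using insert.hyps tot1 by blast
    moreover have "{b \<in> F. (a, b) \<in> A} \<inter> {b \<in> F. (b, a) \<in> A} = {}"
      using asym by blast
    ultimately have "card {b \<in> F. (a, b) \<in> A} + card {b \<in> F. (b, a) \<in> A} = card F"
      using finF by (metis card_Un_disjoint finite_Un)
    then have cE: "card E = card F"
      unfolding E_def using c1 c2 d12 finF by (simp add: card_Un_disjoint)
    have finI: "finite (intarcs A F)" unfolding intarcs_def using finA by auto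
    have finE: "finite E" unfolding E_def using finF by auto
    have "card (intarcs A (insert a F)) = card (intarcs A F) + card F"
      using eq disj finI finE cE by (simp add: card_Un_disjoint)
    then have "2 * card (intarcs A (insert a F)) = card F * (card F - 1) + 2 * card F"
      using insert.IH by simp
    also have "\<dots> = card (insert a F) * (card (insert a F) - 1)"
      using insert.hyps finF by (cases "card F") (auto simp: algebra_simps)
    finally show ?case .
  qed
qed

lemma T23: assumes "S \<subseteq> V"
  shows "2 * int (\<Sum>v\<in>S. outdeg A v) = int (card S) * (int (card S) - 1) + 2 * int (card (outarcs A S))"
proof -
  have a: "2 * card (intarcs A S) = card S * (card S - 1)" by (rule T3[OF assms])
  have b: "int (card S * (card S - 1)) = int (card S) * (int (card S) - 1)"
    by (cases "card S") (auto simp: algebra_simps)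
  show ?thesis using T2[OF assms] a b by (metis (no_types, opaque_lifting) distrib_left of_nat_add of_nat_mult of_nat_numeral)
qed

lemma LP:
  assumes xV: "x \<in> V" and yV: "y \<in> V" and xy: "x \<noteq> y" and finZ: "finite Z" and cZ: "card Z \<le> R"
    and nowalk: "\<not> (\<exists>xs. xs \<noteq> [] \<and> hd xs = x \<and> last xs = y \<and> length xs \<le> 5 \<and> path_arcs xs \<subseteq> A - Z)"
  shows "\<exists>P w. P \<subseteq> V \<and> int (outdeg A x) + 1 \<le> int (card P) + int R \<and>
     int (card P) \<le> int (outdeg A y) + int R \<and>
     int w + int (outdeg A x) + 1 \<le> int (outdeg A y) + 2 * int R \<and>
     card (outarcs A P) \<le> R + w * w"
proof -
  define A' where "A' = A - Z"
  have nw: "\<And>xs. xs \<noteq> [] \<Longrightarrow> hd xs = x \<Longrightarrow> last xs = y \<Longrightarrow> length xs \<le> 5 \<Longrightarrow> \<not> path_arcs xs \<subseteq> A'"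
    using nowalk unfolding A'_def by blast
  have f1: "(x, y) \<notin> A'" using nw[of "[x, y]"] by (simp add: path_arcs_def)
  have f2: "\<And>a. (x, a) \<in> A' \<Longrightarrow> (a, y) \<notin> A'"
  proof -
    fix a assume "(x, a) \<in> A'"
    then show "(a, y) \<notin> A'" using nw[of "[x, a, y]"] by (simp add: path_arcs_def)
  qed
  have f3: "\<And>a b. (x, a) \<in> A' \<Longrightarrow> (a, b) \<in> A' \<Longrightarrow> (b, y) \<notin> A'"
  proof -
    fix a b assume "(x, a) \<in> A'" "(a, b) \<in> A'"
    then show "(b, y) \<notin> A'" using nw[of "[x, a, b, y]"] by (simp add: path_arcs_def)
  qed
  have f4: "\<And>a b c. (x, a) \<in> A' \<Longrightarrow> (a, b) \<in> A' \<Longrightarrow> (b, c) \<in> A' \<Longrightarrow> (c, y) \<notin> A'"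
  proof -
    fix a b c assume "(x, a) \<in> A'" "(a, b) \<in> A'" "(b, c) \<in> A'"
    then show "(c, y) \<notin> A'" using nw[of "[x, a, b, c, y]"] by (simp add: path_arcs_def)
  qed
  define S1 where "S1 = insert x {a. (x, a) \<in> A'}"
  define T1 where "T1 = insert y {b. (b, y) \<in> A'}"
  define S2 where "S2 = S1 \<union> {w. \<exists>a\<in>S1. (a, w) \<in> A'}"
  have g1: "\<And>w. w \<in> S2 \<Longrightarrow> (w, y) \<notin> A'"
    unfolding S2_def S1_def using f1 f2 f3 by blast
  have g2: "\<And>w b. w \<in> S2 \<Longrightarrow> (w, b) \<in> A' \<Longrightarrow> (b, y) \<notin> A'"
    unfolding S2_def S1_def using f2 f3 f4 by blast
  have yS2: "y \<notin> S2"
  proof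
    assume "y \<in> S2"
    then show False unfolding S2_def S1_def using xy f1 g1 unfolding S2_def S1_def by blast
  qed
  have S1S2: "S1 \<subseteq> S2" unfolding S2_def by auto
  have disj: "S1 \<inter> T1 = {}"
  proof (rule ccontr)
    assume "S1 \<inter> T1 \<noteq> {}"
    then obtain v where v: "v \<in> S1" "v \<in> T1" by auto
    then have "v \<in> S2" using S1S2 by auto
    then show False using v(2) yS2 g1 unfolding T1_def by auto
  qed
  have A'A: "A' \<subseteq> A" unfolding A'_def by auto
  have S1V: "S1 \<subseteq> V" unfolding S1_def using xV AV A'A by auto
  have T1V: "T1 \<subseteq> V" unfolding T1_def using yV AV A'A by auto
  have S2V: "S2 \<subseteq> V" unfolding S2_def using S1V AV A'A by auto
  have finS1: "finite S1" using finite_subset[OF S1V finV] .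
  have finT1: "finite T1" using finite_subset[OF T1V finV] .
  have finS2: "finite S2" using finite_subset[OF S2V finV] .
  have s1: "{a. (x, a) \<in> A'} \<subseteq> V" using AV A'A by auto
  have s2: "{b. (b, y) \<in> A'} \<subseteq> V" using AV A'A by auto
  have fo: "finite {a. (x, a) \<in> A'}" using finite_subset[OF s1 finV] .
  have fi: "finite {b. (b, y) \<in> A'}" using finite_subset[OF s2 finV] .
  have cS1: "card S1 = Suc (card {a. (x, a) \<in> A'})"
    unfolding S1_def using fo noloop A'A by (subst card_insert_disjoint) auto
  have cT1: "card T1 = Suc (card {b. (b, y) \<in> A'})"
    unfolding T1_def using fi noloop A'A by (subst card_insert_disjoint) auto
  have od1: "outdeg A x \<le> card {a. (x, a) \<in> A'} + card Z"
  proof -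
    have "{a. (x, a) \<in> A} \<subseteq> {a. (x, a) \<in> A'} \<union> snd ` Z" unfolding A'_def by force
    then have "card {a. (x, a) \<in> A} \<le> card ({a. (x, a) \<in> A'} \<union> snd ` Z)"
      using fo finZ by (intro card_mono) auto
    also have "\<dots> \<le> card {a. (x, a) \<in> A'} + card (snd ` Z)" by (rule card_Un_le)
    also have "\<dots> \<le> card {a. (x, a) \<in> A'} + card Z" using card_image_le[OF finZ] by simp
    finally show ?thesis unfolding outdeg_def .
  qed
  have id1: "indeg A y \<le> card {b. (b, y) \<in> A'} + card Z"
  proof -
    have "{b. (b, y) \<in> A} \<subseteq> {b. (b, y) \<in> A'} \<union> fst ` Z" unfolding A'_def by force
    then have "card {b. (b, y) \<in> A} \<le> card ({b. (b, y) \<in> A'} \<union> fst ` Z)"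
      using fi finZ by (intro card_mono) auto
    also have "\<dots> \<le> card {b. (b, y) \<in> A'} + card (fst ` Z)" by (rule card_Un_le)
    also have "\<dots> \<le> card {b. (b, y) \<in> A'} + card Z" using card_image_le[OF finZ] by simp
    finally show ?thesis unfolding indeg_def .
  qed
  have dy: "outdeg A y + indeg A y = card V - 1" by (rule deg_sum[OF yV])
  define W where "W = V - (S1 \<union> T1)"
  have cW: "card W + card S1 + card T1 = card V"
  proof -
    have "card (S1 \<union> T1) = card S1 + card T1" using disj finS1 finT1 by (simp add: card_Un_disjoint)
    moreover have "card W = card V - card (S1 \<union> T1)" unfolding W_def
      using S1V T1V finite_subset[of "S1 \<union> T1" V] finV by (simp add: card_Diff_subset)
    moreover have "card (S1 \<union> T1) \<le> card V" using S1V T1V finV by (simp add: card_mono)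
    ultimately show ?thesis by simp
  qed
  have od2: "outdeg A x + 1 \<le> card S2 + card Z"
  proof -
    have "{a. (x, a) \<in> A} \<subseteq> (S2 - {x}) \<union> snd ` Z"
      unfolding A'_def S2_def S1_def using noloop by force
    then have "card {a. (x, a) \<in> A} \<le> card ((S2 - {x}) \<union> snd ` Z)"
      using finS2 finZ by (intro card_mono) auto
    also have "\<dots> \<le> card (S2 - {x}) + card (snd ` Z)" by (rule card_Un_le)
    also have "\<dots> \<le> card (S2 - {x}) + card Z" using card_image_le[OF finZ] by simp
    finally have "outdeg A x \<le> card (S2 - {x}) + card Z" unfolding outdeg_def .
    moreover have "x \<in> S2" unfolding S2_def S1_def by auto
    moreover have "card (S2 - {x}) = card S2 - 1" using \<open>x \<in> S2\<close> finS2 by simp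
    moreover have "card S2 > 0" using \<open>x \<in> S2\<close> finS2 card_gt_0_iff by blast
    ultimately show ?thesis by linarith
  qed
  have id2: "indeg A y + card S2 + 1 \<le> card V + card Z"
  proof -
    have "{b. (b, y) \<in> A} \<subseteq> (V - S2 - {y}) \<union> fst ` Z"
      using g1 noloop AV unfolding A'_def by force
    then have "card {b. (b, y) \<in> A} \<le> card ((V - S2 - {y}) \<union> fst ` Z)"
      using finV finZ by (intro card_mono) auto
    also have "\<dots> \<le> card (V - S2 - {y}) + card (fst ` Z)" by (rule card_Un_le)
    also have "\<dots> \<le> card (V - S2 - {y}) + card Z" using card_image_le[OF finZ] by simp
    finally have "indeg A y \<le> card (V - S2 - {y}) + card Z" unfolding indeg_def .
    moreover have "card (V - S2 - {y}) + card S2 + 1 = card V"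
    proof -
      have "card (V - S2) = card V - card S2" using S2V finS2 by (simp add: card_Diff_subset)
      moreover have "card S2 \<le> card V" using S2V finV by (simp add: card_mono)
      moreover have "y \<in> V - S2" using yV yS2 by auto
      moreover have "card (V - S2) > 0" using \<open>y \<in> V - S2\<close> finV by (metis card_gt_0_iff empty_iff finite_Diff)
      ultimately show ?thesis using finV by (simp add: card_Diff_singleton)
    qed
    ultimately show ?thesis by linarith
  qed
  have oa: "outarcs A S2 \<subseteq> Z \<union> W \<times> W"
  proof
    fix p assume p: "p \<in> outarcs A S2"
    obtain a b where ab: "p = (a, b)" by (cases p)
    have abA: "(a, b) \<in> A" "a \<in> S2" "b \<notin> S2" using p ab unfolding outarcs_def by auto
    show "p \<in> Z \<union> W \<times> W"
    proof (cases "(a, b) \<in> Z")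
      case True then show ?thesis using ab by auto
    next
      case False
      then have abA': "(a, b) \<in> A'" using abA unfolding A'_def by auto
      have aS1: "a \<notin> S1" using abA abA' unfolding S2_def by auto
      have aT1: "a \<notin> T1" using abA(2) yS2 g1 unfolding T1_def by auto
      have bS1: "b \<notin> S1" using abA(3) S1S2 by auto
      have bT1: "b \<notin> T1" using g1[OF abA(2)] g2[OF abA(2) abA'] abA' unfolding T1_def by auto
      have "a \<in> V" "b \<in> V" using abA(1) AV by auto
      then show ?thesis using ab aS1 aT1 bS1 bT1 unfolding W_def by auto
    qed
  qed
  have coa: "card (outarcs A S2) \<le> card Z + card W * card W"
  proof -
    have "finite W" unfolding W_def using finV by auto
    then have "card (outarcs A S2) \<le> card (Z \<union> W \<times> W)" using oa finZ by (intro card_mono) auto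
    also have "\<dots> \<le> card Z + card (W \<times> W)" by (rule card_Un_le)
    finally show ?thesis by (simp add: card_cartesian_product)
  qed
  show ?thesis
  proof (intro exI conjI)
    show "S2 \<subseteq> V" by (rule S2V)
    show "int (outdeg A x) + 1 \<le> int (card S2) + int R" using od2 cZ by linarith
    have V1: "card V \<ge> 1" using yV finV card_gt_0_iff by (metis One_nat_def Suc_leI empty_iff)
    have n1: "card S2 \<le> outdeg A y + R" using id2 dy cZ V1 by linarith
    then show "int (card S2) \<le> int (outdeg A y) + int R" by linarith
    show "int (card W) + int (outdeg A x) + 1 \<le> int (outdeg A y) + 2 * int R"
    proof -
      have "card W + outdeg A x + 1 \<le> outdeg A y + 2 * R" using cW cS1 cT1 od1 id1 dy cZ V1 by linarith
      then show ?thesis by linarith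
    qed
    show "card (outarcs A S2) \<le> R + card W * card W" using coa cZ by linarith
  qed
qed

end




definition Cset :: "'a set \<Rightarrow> ('a \<Rightarrow> nat) \<Rightarrow> nat \<Rightarrow> 'a set" where
  "Cset V \<sigma> \<alpha> = {v \<in> V. \<alpha> < \<sigma> v}"
definition hh :: "'a set \<Rightarrow> ('a \<times> 'a) set \<Rightarrow> ('a \<Rightarrow> nat) \<Rightarrow> nat \<Rightarrow> nat" where
  "hh V A \<sigma> \<alpha> = card (outarcs A (Cset V \<sigma> \<alpha>))"

lemma sum_lb:
  fixes f :: "'b \<Rightarrow> int"
  assumes "finite D" "\<And>v. v \<in> D \<Longrightarrow> c \<le> f v"
  shows "int (card D) * c \<le> (\<Sum>v\<in>D. f v)"
proof -
  have "(\<Sum>v\<in>D. c) \<le> (\<Sum>v\<in>D. f v)" using assms by (intro sum_mono) auto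
  then show ?thesis by simp
qed

lemma sum_ub:
  fixes f :: "'b \<Rightarrow> int"
  assumes "finite D" "\<And>v. v \<in> D \<Longrightarrow> f v \<le> c"
  shows "(\<Sum>v\<in>D. f v) \<le> int (card D) * c"
proof -
  have "(\<Sum>v\<in>D. f v) \<le> (\<Sum>v\<in>D. c)" using assms by (intro sum_mono) auto
  then show ?thesis by simp
qed

context
  fixes V :: "'a set" and A :: "('a \<times> 'a) set" and \<sigma> :: "'a \<Rightarrow> nat"
  assumes tour: "tournament V A" and bij: "bij_betw \<sigma> V {1..card V}"
    and mono: "\<And>u v. u \<in> V \<Longrightarrow> v \<in> V \<Longrightarrow> \<sigma> u < \<sigma> v \<Longrightarrow> outdeg A v \<le> outdeg A u"
begin

abbreviation "n \<equiv> card V"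
abbreviation "C \<equiv> Cset V \<sigma>"
abbreviation "h \<equiv> hh V A \<sigma>"
abbreviation "sc \<equiv> outdeg A"

lemma finV': "finite V" using finV[OF tour] .

lemma C_sub: "C \<alpha> \<subseteq> V" unfolding Cset_def by auto

lemma finC: "finite (C \<alpha>)" using finite_subset[OF C_sub finV'] .

lemma sig_range: "v \<in> V \<Longrightarrow> 1 \<le> \<sigma> v \<and> \<sigma> v \<le> n"
  using bij unfolding bij_betw_def by auto

lemma pos: assumes "1 \<le> p" "p \<le> n" shows "\<exists>v\<in>V. \<sigma> v = p"
proof -
  have "p \<in> \<sigma> ` V" using bij assms unfolding bij_betw_def by auto
  then show ?thesis by auto
qed

lemma C_card: assumes "\<alpha> \<le> n" shows "card (C \<alpha>) = n - \<alpha>"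
proof -
  have inj: "inj_on \<sigma> (C \<alpha>)" using bij C_sub unfolding bij_betw_def by (metis inj_on_subset)
  have "\<sigma> ` C \<alpha> = {Suc \<alpha>..n}"
  proof
    show "\<sigma> ` C \<alpha> \<subseteq> {Suc \<alpha>..n}" unfolding Cset_def using sig_range by auto
    show "{Suc \<alpha>..n} \<subseteq> \<sigma> ` C \<alpha>"
    proof
      fix p assume p: "p \<in> {Suc \<alpha>..n}"
      then obtain v where "v \<in> V" "\<sigma> v = p" using pos[of p] by auto
      then show "p \<in> \<sigma> ` C \<alpha>" using p unfolding Cset_def by auto
    qed
  qed
  then have "card (C \<alpha>) = card {Suc \<alpha>..n}" using card_image[OF inj] by simp
  then show ?thesis by simp
qed

lemma C_mono: "\<alpha> \<le> \<beta> \<Longrightarrow> C \<beta> \<subseteq> C \<alpha>" unfolding Cset_def by auto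

lemma Cdiff_card: assumes "\<alpha> \<le> \<beta>" "\<beta> \<le> n" shows "card (C \<alpha> - C \<beta>) = \<beta> - \<alpha>"
  using C_card[of \<alpha>] C_card[of \<beta>] assms card_Diff_subset[OF finC C_mono[OF assms(1)]] by simp

lemma Cdiff_mem: "v \<in> C \<alpha> - C \<beta> \<longleftrightarrow> v \<in> V \<and> \<alpha> < \<sigma> v \<and> \<sigma> v \<le> \<beta>"
  unfolding Cset_def by auto

lemma hdiff:
  assumes "\<alpha> \<le> \<beta>" "\<beta> \<le> n"
  shows "2 * int (h \<alpha>) - 2 * int (h \<beta>) = 2 * (\<Sum>v\<in>C \<alpha> - C \<beta>. int (sc v))
     - (int (n - \<alpha>) * (int (n - \<alpha>) - 1) - int (n - \<beta>) * (int (n - \<beta>) - 1))"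
proof -
  have a: "2 * int (\<Sum>v\<in>C \<alpha>. sc v) = int (card (C \<alpha>)) * (int (card (C \<alpha>)) - 1) + 2 * int (h \<alpha>)"
    using T23[OF tour C_sub] unfolding hh_def .
  have b: "2 * int (\<Sum>v\<in>C \<beta>. sc v) = int (card (C \<beta>)) * (int (card (C \<beta>)) - 1) + 2 * int (h \<beta>)"
    using T23[OF tour C_sub] unfolding hh_def .
  have s: "(\<Sum>v\<in>C \<alpha>. sc v) = (\<Sum>v\<in>C \<alpha> - C \<beta>. sc v) + (\<Sum>v\<in>C \<beta>. sc v)"
    using sum.subset_diff[OF C_mono[OF assms(1)] finC] .
  have s': "int (\<Sum>v\<in>C \<alpha> - C \<beta>. sc v) = (\<Sum>v\<in>C \<alpha> - C \<beta>. int (sc v))" by simp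
  show ?thesis using a b s s' C_card[of \<alpha>] C_card[of \<beta>] assms by simp
qed

lemma cut_eq: "cut_at A \<sigma> \<alpha> = outarcs A (C \<alpha>)"
  unfolding cut_at_def outarcs_def Cset_def using AV[OF tour] by auto

lemma h0: "h 0 = 0"
proof -
  have "C 0 = V" unfolding Cset_def using sig_range by force
  then have "outarcs A (C 0) = {}" unfolding outarcs_def using AV[OF tour] by auto
  then show ?thesis unfolding hh_def by simp
qed

lemma hn: "h n = 0"
proof -
  have "C n = {}" unfolding Cset_def using sig_range by force
  then show ?thesis unfolding hh_def outarcs_def by simp
qed

lemma hle: "h \<alpha> \<le> n * n"
proof -
  have "outarcs A (C \<alpha>) \<subseteq> V \<times> V" unfolding outarcs_def using AV[OF tour] by auto
  then have "card (outarcs A (C \<alpha>)) \<le> card (V \<times> V)" using finV' by (intro card_mono) auto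
  then show ?thesis unfolding hh_def by (simp add: card_cartesian_product)
qed

lemma sum_cmp:
  assumes P: "P \<subseteq> V" and Q: "Q \<subseteq> V" and cPQ: "card P = card Q"
    and ord: "\<And>a c. a \<in> P - Q \<Longrightarrow> c \<in> Q - P \<Longrightarrow> sc c \<le> sc a"
  shows "(\<Sum>v\<in>Q. sc v) \<le> (\<Sum>v\<in>P. sc v)"
proof -
  have finP: "finite P" using finite_subset[OF P finV'] .
  have finQ: "finite Q" using finite_subset[OF Q finV'] .
  have c: "card (P - Q) = card (Q - P)"
  proof -
    have "card (P - Q) = card P - card (P \<inter> Q)" using finP by (metis card_Diff_subset_Int finite_Int)
    moreover have "card (Q - P) = card Q - card (Q \<inter> P)" using finQ by (metis card_Diff_subset_Int finite_Int)
    ultimately show ?thesis using cPQ by (simp add: Int_commute)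
  qed
  have e1: "P - P \<inter> Q = P - Q" by auto
  have e2: "Q - P \<inter> Q = Q - P" by auto
  have sP: "(\<Sum>v\<in>P. sc v) = (\<Sum>v\<in>P - Q. sc v) + (\<Sum>v\<in>P \<inter> Q. sc v)"
    using sum.subset_diff[OF Int_lower1[of P Q] finP, of sc] e1 by simp
  have sQ: "(\<Sum>v\<in>Q. sc v) = (\<Sum>v\<in>Q - P. sc v) + (\<Sum>v\<in>P \<inter> Q. sc v)"
    using sum.subset_diff[OF Int_lower2[of P Q] finQ, of sc] e2 by simp
  have "(\<Sum>v\<in>Q - P. sc v) \<le> (\<Sum>v\<in>P - Q. sc v)"
  proof (cases "Q - P = {}")
    case True
    have "(\<Sum>v\<in>Q - P. sc v) = 0" unfolding True by simp
    then show ?thesis by simp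
  next
    case False
    define M where "M = Max (sc ` (Q - P))"
    have finQP: "finite (Q - P)" using finQ by simp
    have M1: "\<And>c. c \<in> Q - P \<Longrightarrow> sc c \<le> M" unfolding M_def using finQP by auto
    obtain c0 where c0: "c0 \<in> Q - P" "sc c0 = M" unfolding M_def using False finQP
      by (metis (no_types, lifting) Max_in empty_is_image finite_imageI imageE)
    have M2: "\<And>a. a \<in> P - Q \<Longrightarrow> M \<le> sc a" using ord c0 by metis
    have "(\<Sum>v\<in>Q - P. sc v) \<le> (\<Sum>v\<in>Q - P. M)" using M1 by (intro sum_mono) auto
    also have "\<dots> = card (Q - P) * M" by simp
    also have "\<dots> = (\<Sum>v\<in>P - Q. M)" using c by simp
    also have "\<dots> \<le> (\<Sum>v\<in>P - Q. sc v)" using M2 by (intro sum_mono) auto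
    finally show ?thesis .
  qed
  then show ?thesis using sP sQ by simp
qed

lemma F2: assumes P: "P \<subseteq> V" shows "h (n - card P) \<le> card (outarcs A P)"
proof -
  have finP: "finite P" using finite_subset[OF P finV'] .
  have cP: "card P \<le> n" using card_mono[OF finV' P] .
  let ?Q = "C (n - card P)"
  have cQ: "card ?Q = card P" using C_card[of "n - card P"] cP by simp
  have ord: "\<And>a c. a \<in> P - ?Q \<Longrightarrow> c \<in> ?Q - P \<Longrightarrow> sc c \<le> sc a"
  proof -
    fix a c assume a: "a \<in> P - ?Q" and c: "c \<in> ?Q - P"
    have "a \<in> V" "c \<in> V" using a c P unfolding Cset_def by auto
    moreover have "\<sigma> a < \<sigma> c" using a c P unfolding Cset_def by auto
    ultimately show "sc c \<le> sc a" using mono by blast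
  qed
  have "(\<Sum>v\<in>?Q. sc v) \<le> (\<Sum>v\<in>P. sc v)" using sum_cmp[OF P C_sub cQ[symmetric] ord] by blast
  then have i1: "int (\<Sum>v\<in>?Q. sc v) \<le> int (\<Sum>v\<in>P. sc v)" by linarith
  have t2: "2 * int (\<Sum>v\<in>P. sc v) = int (card P) * (int (card P) - 1) + 2 * int (card (outarcs A P))"
    using T23[OF tour P] .
  have t3: "2 * int (\<Sum>v\<in>?Q. sc v) = int (card ?Q) * (int (card ?Q) - 1) + 2 * int (h (n - card P))"
    using T23[OF tour C_sub] unfolding hh_def .
  then have t3': "2 * int (\<Sum>v\<in>?Q. sc v) = int (card P) * (int (card P) - 1) + 2 * int (h (n - card P))"
    using cQ by simp
  have "int (h (n - card P)) \<le> int (card (outarcs A P))" using i1 t2 t3' by linarith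
  then show ?thesis by linarith
qed


lemma inj_sig: "inj_on \<sigma> V" using bij unfolding bij_betw_def by auto

lemma sig_eq: "u \<in> V \<Longrightarrow> v \<in> V \<Longrightarrow> \<sigma> u = \<sigma> v \<Longrightarrow> u = v"
  using inj_sig unfolding inj_on_def by auto

lemma mono_le: "u \<in> V \<Longrightarrow> v \<in> V \<Longrightarrow> \<sigma> u \<le> \<sigma> v \<Longrightarrow> sc v \<le> sc u"
  using mono sig_eq by (cases "\<sigma> u = \<sigma> v") (auto simp: order.order_iff_strict)

context
  fixes \<alpha>0 :: nat
  assumes a0n: "\<alpha>0 \<le> n" and amax: "\<And>\<alpha>. \<alpha> \<le> n \<Longrightarrow> h \<alpha> \<le> h \<alpha>0" and apos: "0 < h \<alpha>0"
begin

lemma a0_pos: "1 \<le> \<alpha>0"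
proof (rule ccontr)
  assume "\<not> 1 \<le> \<alpha>0" then have "\<alpha>0 = 0" by simp
  then show False using apos h0 by simp
qed

lemma a0_lt: "\<alpha>0 < n"
proof (rule ccontr)
  assume "\<not> \<alpha>0 < n" then have "\<alpha>0 = n" using a0n by simp
  then show False using apos hn by simp
qed

lemma lowA: assumes v: "v \<in> V" "\<sigma> v \<le> Suc \<alpha>0" shows "int (n - \<alpha>0) - 1 \<le> int (sc v)"
proof -
  obtain w where w: "w \<in> V" "\<sigma> w = Suc \<alpha>0" using pos[of "Suc \<alpha>0"] a0_lt by auto
  have D: "C \<alpha>0 - C (Suc \<alpha>0) = {w}"
  proof
    show "C \<alpha>0 - C (Suc \<alpha>0) \<subseteq> {w}"
    proof
      fix x assume "x \<in> C \<alpha>0 - C (Suc \<alpha>0)"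
      then have "x \<in> V" "\<alpha>0 < \<sigma> x" "\<sigma> x \<le> Suc \<alpha>0" using Cdiff_mem by auto
      then have "\<sigma> x = \<sigma> w" using w by simp
      then show "x \<in> {w}" using sig_eq \<open>x \<in> V\<close> w by auto
    qed
    show "{w} \<subseteq> C \<alpha>0 - C (Suc \<alpha>0)" using Cdiff_mem w by auto
  qed
  define M where "M = int (n - \<alpha>0)"
  have M1: "int (n - Suc \<alpha>0) = M - 1" unfolding M_def using a0_lt by simp
  have hd: "2 * int (h \<alpha>0) - 2 * int (h (Suc \<alpha>0)) = 2 * int (sc w) - (M * (M - 1) - (M - 1) * (M - 1 - 1))"
    using hdiff[of \<alpha>0 "Suc \<alpha>0"] D a0_lt M1 unfolding M_def by simp
  have id: "M * (M - 1) - (M - 1) * (M - 1 - 1) = 2 * (M - 1)" by (simp add: algebra_simps)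
  have "h (Suc \<alpha>0) \<le> h \<alpha>0" using amax a0_lt by simp
  then have "int (h (Suc \<alpha>0)) \<le> int (h \<alpha>0)" by simp
  then have "M - 1 \<le> int (sc w)" using hd[unfolded id] by arith
  moreover have "sc w \<le> sc v" using mono_le[OF v(1) w(1)] v w by simp
  ultimately show ?thesis unfolding M_def by arith
qed

lemma upB: assumes v: "v \<in> V" "\<alpha>0 \<le> \<sigma> v" shows "int (sc v) \<le> int (n - \<alpha>0)"
proof -
  obtain w where w: "w \<in> V" "\<sigma> w = \<alpha>0" using pos[of \<alpha>0] a0_pos a0n by auto
  have D: "C (\<alpha>0 - 1) - C \<alpha>0 = {w}"
  proof
    show "C (\<alpha>0 - 1) - C \<alpha>0 \<subseteq> {w}"
    proof
      fix x assume "x \<in> C (\<alpha>0 - 1) - C \<alpha>0"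
      then have "x \<in> V" "\<alpha>0 - 1 < \<sigma> x" "\<sigma> x \<le> \<alpha>0" using Cdiff_mem by auto
      then have "\<sigma> x = \<sigma> w" using w a0_pos by simp
      then show "x \<in> {w}" using sig_eq \<open>x \<in> V\<close> w by auto
    qed
    show "{w} \<subseteq> C (\<alpha>0 - 1) - C \<alpha>0" using Cdiff_mem w a0_pos by auto
  qed
  define M where "M = int (n - \<alpha>0)"
  have M1: "int (n - (\<alpha>0 - 1)) = M + 1" unfolding M_def using a0_lt a0_pos by simp
  have hd: "2 * int (h (\<alpha>0 - 1)) - 2 * int (h \<alpha>0) = 2 * int (sc w) - ((M + 1) * (M + 1 - 1) - M * (M - 1))"
    using hdiff[of "\<alpha>0 - 1" \<alpha>0] D a0n M1 unfolding M_def by simp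
  have id: "(M + 1) * (M + 1 - 1) - M * (M - 1) = 2 * M" by (simp add: algebra_simps)
  have "h (\<alpha>0 - 1) \<le> h \<alpha>0" using amax a0n by simp
  then have "int (h (\<alpha>0 - 1)) \<le> int (h \<alpha>0)" by simp
  then have "int (sc w) \<le> M" using hd[unfolded id] by arith
  moreover have "sc v \<le> sc w" using mono_le[OF w(1) v(1)] v w by simp
  ultimately show ?thesis unfolding M_def by arith
qed

lemma F3: assumes an: "\<alpha> \<le> n"
  shows "2 * int (h \<alpha>0) \<le> 2 * int (h \<alpha>) + \<bar>int \<alpha> - int \<alpha>0\<bar> * (\<bar>int \<alpha> - int \<alpha>0\<bar> + 1)"
proof (cases "\<alpha> \<le> \<alpha>0")
  case True
  define M where "M = int (n - \<alpha>0)"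
  define I where "I = int \<alpha>0 - int \<alpha>"
  have abs: "\<bar>int \<alpha> - int \<alpha>0\<bar> = I" unfolding I_def using True by simp
  have nA: "int (n - \<alpha>) = M + I" unfolding M_def I_def using True a0n by simp
  let ?D = "C \<alpha> - C \<alpha>0"
  have cD: "int (card ?D) = I" using Cdiff_card[OF True a0n] True unfolding I_def by simp
  have lb: "\<And>v. v \<in> ?D \<Longrightarrow> M - 1 \<le> int (sc v)"
    using lowA Cdiff_mem unfolding M_def by (metis le_SucI)
  have sD: "I * (M - 1) \<le> (\<Sum>v\<in>?D. int (sc v))" using sum_lb[of ?D "M - 1" "\<lambda>v. int (sc v)"] lb cD finC by simp
  have hd: "2 * int (h \<alpha>) - 2 * int (h \<alpha>0) = 2 * (\<Sum>v\<in>?D. int (sc v)) - ((M + I) * (M + I - 1) - M * (M - 1))"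
    using hdiff[OF True a0n] nA unfolding M_def by simp
  have id: "(M + I) * (M + I - 1) - M * (M - 1) = 2 * (I * (M - 1)) + I * (I + 1)"
    by (simp add: algebra_simps)
  show ?thesis unfolding abs using hd[unfolded id] sD by arith
next
  case False
  then have le: "\<alpha>0 \<le> \<alpha>" by simp
  define M where "M = int (n - \<alpha>0)"
  define I where "I = int \<alpha> - int \<alpha>0"
  have abs: "\<bar>int \<alpha> - int \<alpha>0\<bar> = I" unfolding I_def using le by simp
  have nA: "int (n - \<alpha>) = M - I" unfolding M_def I_def using le an by simp
  let ?D = "C \<alpha>0 - C \<alpha>"
  have cD: "int (card ?D) = I" using Cdiff_card[OF le an] le unfolding I_def by simp
  have ub: "\<And>v. v \<in> ?D \<Longrightarrow> int (sc v) \<le> M"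
    using upB Cdiff_mem unfolding M_def by (metis less_imp_le)
  have sD: "(\<Sum>v\<in>?D. int (sc v)) \<le> I * M" using sum_ub[of ?D "\<lambda>v. int (sc v)" M] ub cD finC by simp
  have hd: "2 * int (h \<alpha>0) - 2 * int (h \<alpha>) = 2 * (\<Sum>v\<in>?D. int (sc v)) - (M * (M - 1) - (M - I) * (M - I - 1))"
    using hdiff[OF le an] nA unfolding M_def by simp
  have id: "M * (M - 1) - (M - I) * (M - I - 1) = 2 * (I * M) - I * (I + 1)"
    by (simp add: algebra_simps)
  show ?thesis unfolding abs using hd[unfolded id] sD by arith
qed


lemma F4: assumes N1: "1 \<le> N" and n4: "4 * N \<le> n"
  shows "\<exists>X \<subseteq> V. card X = N \<and> (\<forall>x\<in>X. int (n - \<alpha>0) - 2 * int N - 1 \<le> int (sc x) \<and>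
            int (sc x) \<le> int (n - \<alpha>0) + 2 * int N)"
proof -
  define M where "M = int (n - \<alpha>0)"
  define K where "K = int N"
  have K1: "1 \<le> K" unfolding K_def using N1 by simp
  show ?thesis
  proof (cases "2 * N \<le> \<alpha>0")
    case True
    define X where "X = C (\<alpha>0 - N) - C \<alpha>0"
    have le1: "\<alpha>0 - N \<le> \<alpha>0" by simp
    have cX: "card X = N" unfolding X_def using Cdiff_card[OF le1 a0n] True by simp
    have pw: "Suc (\<alpha>0 - N) \<le> n" using True a0n N1 by arith
    obtain w where w: "w \<in> V" "\<sigma> w = Suc (\<alpha>0 - N)" using pos[of "Suc (\<alpha>0 - N)"] pw by auto
    have le2: "\<alpha>0 - 2 * N \<le> \<alpha>0 - N" by simp
    have n1: "\<alpha>0 - N \<le> n" using a0n by simp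
    have e1: "int (n - (\<alpha>0 - N)) = M + K" unfolding M_def K_def using True a0n by simp
    have e2: "int (n - (\<alpha>0 - 2 * N)) = M + 2 * K" unfolding M_def K_def using True a0n by simp
    have hd1: "2 * int (h (\<alpha>0 - 2 * N)) - 2 * int (h (\<alpha>0 - N)) =
       2 * (\<Sum>v\<in>C (\<alpha>0 - 2 * N) - C (\<alpha>0 - N). int (sc v)) - ((M + 2 * K) * (M + 2 * K - 1) - (M + K) * (M + K - 1))"
      using hdiff[OF le2 n1] e1 e2 by simp
    have hd2: "2 * int (h (\<alpha>0 - N)) - 2 * int (h \<alpha>0) =
       2 * (\<Sum>v\<in>X. int (sc v)) - ((M + K) * (M + K - 1) - M * (M - 1))"
      using hdiff[OF le1 a0n] e1 unfolding X_def M_def by simp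
    have id1: "(M + 2 * K) * (M + 2 * K - 1) - (M + K) * (M + K - 1) = 2 * (K * M) + 3 * (K * K) - K"
      by (simp add: algebra_simps)
    have id2: "(M + K) * (M + K - 1) - M * (M - 1) = 2 * (K * M) + K * K - K"
      by (simp add: algebra_simps)
    have cD2: "int (card (C (\<alpha>0 - 2 * N) - C (\<alpha>0 - N))) = K"
      using Cdiff_card[OF le2 n1] True unfolding K_def by simp
    have lbD2: "\<And>v. v \<in> C (\<alpha>0 - 2 * N) - C (\<alpha>0 - N) \<Longrightarrow> int (sc w) \<le> int (sc v)"
    proof -
      fix v assume "v \<in> C (\<alpha>0 - 2 * N) - C (\<alpha>0 - N)"
      then have "v \<in> V" "\<sigma> v \<le> \<alpha>0 - N" using Cdiff_mem by auto
      then show "int (sc w) \<le> int (sc v)" using mono_le[of v w] w by simp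
    qed
    have sD2: "K * int (sc w) \<le> (\<Sum>v\<in>C (\<alpha>0 - 2 * N) - C (\<alpha>0 - N). int (sc v))"
    proof -
      have finD2: "finite (C (\<alpha>0 - 2 * N) - C (\<alpha>0 - N))" using finC by simp
      show ?thesis using sum_lb[OF finD2 lbD2] cD2 by simp
    qed
    have lbX: "\<And>v. v \<in> X \<Longrightarrow> M - 1 \<le> int (sc v)"
    proof -
      fix v assume "v \<in> X"
      then have "v \<in> V" "\<sigma> v \<le> Suc \<alpha>0" using Cdiff_mem unfolding X_def by auto
      then show "M - 1 \<le> int (sc v)" using lowA unfolding M_def by blast
    qed
    have finX: "finite X" unfolding X_def using finC by simp
    have sX: "K * (M - 1) \<le> (\<Sum>v\<in>X. int (sc v))"
      using sum_lb[OF finX lbX] cX unfolding K_def by simp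
    have "h (\<alpha>0 - 2 * N) \<le> h \<alpha>0" using amax a0n by simp
    then have hh: "int (h (\<alpha>0 - 2 * N)) \<le> int (h \<alpha>0)" by simp
    have key: "K * int (sc w) \<le> K * (M + 2 * K)"
      using hd1[unfolded id1] hd2[unfolded id2] sD2 sX hh by (simp add: algebra_simps)
    have sw: "int (sc w) \<le> M + 2 * K"
      using key K1 by (meson mult_le_cancel_left_pos zero_less_one order_less_le_trans)
    have "\<forall>x\<in>X. M - 2 * K - 1 \<le> int (sc x) \<and> int (sc x) \<le> M + 2 * K"
    proof
      fix x assume x: "x \<in> X"
      have xV: "x \<in> V" "\<alpha>0 - N < \<sigma> x" using x Cdiff_mem unfolding X_def by auto
      have "sc x \<le> sc w" using mono_le[of w x] w xV by simp
      then show "M - 2 * K - 1 \<le> int (sc x) \<and> int (sc x) \<le> M + 2 * K" using lbX[OF x] sw K1 by arith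
    qed
    moreover have "X \<subseteq> V" unfolding X_def using C_sub by auto
    ultimately show ?thesis using cX unfolding M_def K_def by blast
  next
    case False
    then have a2: "\<alpha>0 + 2 * N \<le> n" using n4 by simp
    define X where "X = C \<alpha>0 - C (\<alpha>0 + N)"
    have le1: "\<alpha>0 \<le> \<alpha>0 + N" by simp
    have n1: "\<alpha>0 + N \<le> n" using a2 by simp
    have cX: "card X = N" unfolding X_def using Cdiff_card[OF le1 n1] by simp
    obtain w where w: "w \<in> V" "\<sigma> w = \<alpha>0 + N" using pos[of "\<alpha>0 + N"] n1 N1 by auto
    have le2: "\<alpha>0 + N \<le> \<alpha>0 + 2 * N" by simp
    have e1: "int (n - (\<alpha>0 + N)) = M - K" unfolding M_def K_def using a2 by simp
    have e2: "int (n - (\<alpha>0 + 2 * N)) = M - 2 * K" unfolding M_def K_def using a2 by simp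
    have hd1: "2 * int (h \<alpha>0) - 2 * int (h (\<alpha>0 + N)) =
       2 * (\<Sum>v\<in>X. int (sc v)) - (M * (M - 1) - (M - K) * (M - K - 1))"
      using hdiff[OF le1 n1] e1 unfolding X_def M_def by simp
    have hd2: "2 * int (h (\<alpha>0 + N)) - 2 * int (h (\<alpha>0 + 2 * N)) =
       2 * (\<Sum>v\<in>C (\<alpha>0 + N) - C (\<alpha>0 + 2 * N). int (sc v)) - ((M - K) * (M - K - 1) - (M - 2 * K) * (M - 2 * K - 1))"
      using hdiff[OF le2 a2] e1 e2 by simp
    have id1: "M * (M - 1) - (M - K) * (M - K - 1) = 2 * (K * M) - K * K - K"
      by (simp add: algebra_simps)
    have id2: "(M - K) * (M - K - 1) - (M - 2 * K) * (M - 2 * K - 1) = 2 * (K * M) - 3 * (K * K) - K"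
      by (simp add: algebra_simps)
    have cD2: "int (card (C (\<alpha>0 + N) - C (\<alpha>0 + 2 * N))) = K"
      using Cdiff_card[OF le2 a2] unfolding K_def by simp
    have ubD2: "\<And>v. v \<in> C (\<alpha>0 + N) - C (\<alpha>0 + 2 * N) \<Longrightarrow> int (sc v) \<le> int (sc w)"
    proof -
      fix v assume "v \<in> C (\<alpha>0 + N) - C (\<alpha>0 + 2 * N)"
      then have "v \<in> V" "\<alpha>0 + N < \<sigma> v" using Cdiff_mem by auto
      then show "int (sc v) \<le> int (sc w)" using mono_le[of w v] w by simp
    qed
    have sD2: "(\<Sum>v\<in>C (\<alpha>0 + N) - C (\<alpha>0 + 2 * N). int (sc v)) \<le> K * int (sc w)"
    proof -
      have finD2: "finite (C (\<alpha>0 + N) - C (\<alpha>0 + 2 * N))" using finC by simp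
      show ?thesis using sum_ub[OF finD2 ubD2] cD2 by simp
    qed
    have ubX: "\<And>v. v \<in> X \<Longrightarrow> int (sc v) \<le> M"
    proof -
      fix v assume "v \<in> X"
      then have "v \<in> V" "\<alpha>0 \<le> \<sigma> v" using Cdiff_mem unfolding X_def by auto
      then show "int (sc v) \<le> M" using upB unfolding M_def by blast
    qed
    have finX: "finite X" unfolding X_def using finC by simp
    have sX: "(\<Sum>v\<in>X. int (sc v)) \<le> K * M"
      using sum_ub[OF finX ubX] cX unfolding K_def by simp
    have "h (\<alpha>0 + 2 * N) \<le> h \<alpha>0" using amax a2 by simp
    then have hh: "int (h (\<alpha>0 + 2 * N)) \<le> int (h \<alpha>0)" by simp
    have key: "K * (M - 2 * K - 1) \<le> K * int (sc w)"
      using hd1[unfolded id1] hd2[unfolded id2] sD2 sX hh by (simp add: algebra_simps)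
    have sw: "M - 2 * K - 1 \<le> int (sc w)"
      using key K1 by (meson mult_le_cancel_left_pos zero_less_one order_less_le_trans)
    have "\<forall>x\<in>X. M - 2 * K - 1 \<le> int (sc x) \<and> int (sc x) \<le> M + 2 * K"
    proof
      fix x assume x: "x \<in> X"
      have xV: "x \<in> V" "\<sigma> x \<le> \<alpha>0 + N" using x Cdiff_mem unfolding X_def by auto
      have "sc w \<le> sc x" using mono_le[of x w] w xV by simp
      then show "M - 2 * K - 1 \<le> int (sc x) \<and> int (sc x) \<le> M + 2 * K" using ubX[OF x] sw K1 by arith
    qed
    moreover have "X \<subseteq> V" unfolding X_def using C_sub by auto
    ultimately show ?thesis using cX unfolding M_def K_def by blast
  qed
qed


lemma mainlem: assumes N1: "1 \<le> N" and big: "200 * N * N < h \<alpha>0"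
  shows "\<exists>X \<subseteq> V. card X = N \<and> robust A X (4 * N)"
proof -
  have n4: "4 * N \<le> n"
  proof (rule ccontr)
    assume "\<not> 4 * N \<le> n"
    then have "n < 4 * N" by simp
    then have "n * n \<le> (4 * N) * (4 * N)" by (intro mult_mono) auto
    moreover have "h \<alpha>0 \<le> n * n" by (rule hle)
    ultimately show False using big by simp
  qed
  obtain X where X: "X \<subseteq> V" "card X = N"
    and sb: "\<forall>x\<in>X. int (n - \<alpha>0) - 2 * int N - 1 \<le> int (sc x) \<and> int (sc x) \<le> int (n - \<alpha>0) + 2 * int N"
    using F4[OF N1 n4] by blast
  have "robust A X (4 * N)"
    unfolding robust_def
  proof (intro ballI impI allI)
    fix x y and Z :: "('a \<times> 'a) set" assume x: "x \<in> X" and y: "y \<in> X" and xy: "x \<noteq> y" and finZ: "finite Z" and cZ: "card Z \<le> 4 * N"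
    show "\<exists>xs. xs \<noteq> [] \<and> hd xs = x \<and> last xs = y \<and> length xs \<le> 5 \<and> path_arcs xs \<subseteq> A - Z"
    proof (rule ccontr)
      assume nw: "\<not> (\<exists>xs. xs \<noteq> [] \<and> hd xs = x \<and> last xs = y \<and> length xs \<le> 5 \<and> path_arcs xs \<subseteq> A - Z)"
      obtain P w where P: "P \<subseteq> V" and p1: "int (sc x) + 1 \<le> int (card P) + int (4 * N)"
        and p2: "int (card P) \<le> int (sc y) + int (4 * N)"
        and p3: "int w + int (sc x) + 1 \<le> int (sc y) + 2 * int (4 * N)"
        and p4: "card (outarcs A P) \<le> 4 * N + w * w"
        using LP[OF tour _ _ xy finZ cZ nw] x y X(1) by blast
      define M where "M = int (n - \<alpha>0)"
      define K where "K = int N"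
      define p where "p = int (card P)"
      have K1: "1 \<le> K" unfolding K_def using N1 by simp
      have cP: "card P \<le> n" using card_mono[OF finV' P] .
      have f3: "2 * int (h \<alpha>0) \<le> 2 * int (h (n - card P)) + \<bar>int (n - card P) - int \<alpha>0\<bar> * (\<bar>int (n - card P) - int \<alpha>0\<bar> + 1)"
        using F3[of "n - card P"] by simp
      define i where "i = \<bar>int (n - card P) - int \<alpha>0\<bar>"
      have ieq: "i = \<bar>M - p\<bar>" unfolding i_def M_def p_def using cP a0n by simp
      have sx: "M - 2 * K - 1 \<le> int (sc x)" "int (sc x) \<le> M + 2 * K" using sb x unfolding M_def K_def by auto
      have sy: "M - 2 * K - 1 \<le> int (sc y)" "int (sc y) \<le> M + 2 * K" using sb y unfolding M_def K_def by auto
      have i0: "0 \<le> i" "i \<le> 6 * K" using ieq sx sy p1 p2 unfolding p_def K_def by auto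
      have w0: "int w \<le> 12 * K" using p3 sx sy unfolding K_def by simp
      have ww: "int w * int w \<le> (12 * K) * (12 * K)" using w0 by (intro mult_mono) auto
      have ii: "i * (i + 1) \<le> (6 * K) * (6 * K + 1)" using i0 by (intro mult_mono) auto
      have f2: "h (n - card P) \<le> card (outarcs A P)" by (rule F2[OF P])
      have hbn: "h (n - card P) \<le> 4 * N + w * w" using f2 p4 by (rule order.trans)
      then have "int (h (n - card P)) \<le> int (4 * N + w * w)" by (simp only: of_nat_le_iff)
      then have hb: "int (h (n - card P)) \<le> 4 * K + int w * int w" unfolding K_def by simp
      have "int (200 * N * N) < int (h \<alpha>0)" using big by (simp only: of_nat_less_iff)
      then have H: "200 * K * K < int (h \<alpha>0)" unfolding K_def by simp
      have KK: "K \<le> K * K" using K1 by simp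
      have "2 * int (h \<alpha>0) \<le> 2 * (4 * K + int w * int w) + i * (i + 1)" using f3 hb unfolding i_def by simp
      then have "2 * int (h \<alpha>0) \<le> 2 * (4 * K + (12 * K) * (12 * K)) + (6 * K) * (6 * K + 1)" using ww ii by simp
      then show False using H KK by (simp add: algebra_simps)
    qed
  qed
  then show ?thesis using X by blast
qed

end

end


definition prec :: "(nat \<times> nat) set \<Rightarrow> nat \<Rightarrow> nat \<Rightarrow> bool" where
  "prec A u v \<longleftrightarrow> outdeg A v < outdeg A u \<or> (outdeg A u = outdeg A v \<and> u < v)"

definition rk :: "(nat \<times> nat) set \<Rightarrow> nat set \<Rightarrow> nat \<Rightarrow> nat" where
  "rk A V v = Suc (card {u \<in> V. prec A u v})"

lemma prec_irrefl: "\<not> prec A u u" unfolding prec_def by auto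
lemma prec_trans: "prec A u v \<Longrightarrow> prec A v w \<Longrightarrow> prec A u w" unfolding prec_def by auto
lemma prec_total: "u \<noteq> v \<Longrightarrow> prec A u v \<or> prec A v u" unfolding prec_def by auto

lemma rk_less:
  assumes fin: "finite V" and u: "u \<in> V" and v: "v \<in> V" and p: "prec A u v"
  shows "rk A V u < rk A V v"
proof -
  have "{w \<in> V. prec A w u} \<subset> {w \<in> V. prec A w v}"
  proof
    show "{w \<in> V. prec A w u} \<subseteq> {w \<in> V. prec A w v}" using prec_trans p by blast
    show "{w \<in> V. prec A w u} \<noteq> {w \<in> V. prec A w v}" using u p prec_irrefl by blast
  qed
  then have "card {w \<in> V. prec A w u} < card {w \<in> V. prec A w v}"
    using fin by (intro psubset_card_mono) auto
  then show ?thesis unfolding rk_def by simp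
qed

lemma rk_bij: assumes fin: "finite V" shows "bij_betw (rk A V) V {1..card V}"
proof -
  have inj: "inj_on (rk A V) V"
  proof (rule inj_onI)
    fix u v assume uv: "u \<in> V" "v \<in> V" "rk A V u = rk A V v"
    show "u = v"
    proof (rule ccontr)
      assume "u \<noteq> v"
      then have "prec A u v \<or> prec A v u" by (rule prec_total)
      then show False using rk_less[where A=A, OF fin uv(1) uv(2)] rk_less[where A=A, OF fin uv(2) uv(1)] uv(3) by auto
    qed
  qed
  have sub: "rk A V ` V \<subseteq> {1..card V}"
  proof
    fix p assume "p \<in> rk A V ` V"
    then obtain v where v: "v \<in> V" "p = rk A V v" by auto
    have "{u \<in> V. prec A u v} \<subseteq> V - {v}" using prec_irrefl by auto
    then have "card {u \<in> V. prec A u v} \<le> card (V - {v})" using fin by (intro card_mono) auto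
    also have "\<dots> = card V - 1" using v fin by simp
    finally have "card {u \<in> V. prec A u v} \<le> card V - 1" .
    moreover have "card V \<ge> 1" using v fin by (metis One_nat_def Suc_leI card_gt_0_iff empty_iff)
    ultimately show "p \<in> {1..card V}" using v unfolding rk_def by auto
  qed
  have "card (rk A V ` V) = card {1..card V}" using card_image[OF inj] by simp
  then have "rk A V ` V = {1..card V}" using sub by (intro card_subset_eq) auto
  then show ?thesis using inj unfolding bij_betw_def by simp
qed

lemma rk_mono:
  assumes fin: "finite V" and u: "u \<in> V" and v: "v \<in> V" and lt: "rk A V u < rk A V v"
  shows "outdeg A v \<le> outdeg A u"
proof -
  have "u \<noteq> v" using lt by auto
  then have "prec A u v \<or> prec A v u" by (rule prec_total)
  moreover have "\<not> prec A v u" using rk_less[where A=A, OF fin v u] lt by auto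
  ultimately have "prec A u v" by simp
  then show ?thesis unfolding prec_def by auto
qed

lemma width_bound:
  fixes VH :: "nat set" and AH :: "(nat \<times> nat) set" and VT :: "nat set" and AT :: "(nat \<times> nat) set"
  assumes sd: "simple_digraph VH AH" and tour: "tournament VT AT"
    and nh: "\<not> has_disjoint_immersions k VH AH VT AT"
  shows "cutwidth VT AT \<le> 200 * (k * size_dg VH AH) * (k * size_dg VH AH)"
proof -
  define N where "N = k * size_dg VH AH"
  define \<sigma> where "\<sigma> = rk AT VT"
  have finVT: "finite VT" using finV[OF tour] .
  have bij: "bij_betw \<sigma> VT {1..card VT}" unfolding \<sigma>_def by (rule rk_bij[OF finVT])
  have mono: "\<And>u v. u \<in> VT \<Longrightarrow> v \<in> VT \<Longrightarrow> \<sigma> u < \<sigma> v \<Longrightarrow> outdeg AT v \<le> outdeg AT u"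
    unfolding \<sigma>_def using rk_mono[OF finVT] by blast
  have allb: "\<forall>\<alpha>\<in>{0..card VT}. card (cut_at AT \<sigma> \<alpha>) \<le> 200 * N * N"
  proof (rule ccontr)
    assume "\<not> (\<forall>\<alpha>\<in>{0..card VT}. card (cut_at AT \<sigma> \<alpha>) \<le> 200 * N * N)"
    then obtain \<alpha>1 where a1: "\<alpha>1 \<le> card VT" "200 * N * N < hh VT AT \<sigma> \<alpha>1"
      using cut_eq[OF tour bij mono] unfolding hh_def by force
    define S where "S = hh VT AT \<sigma> ` {0..card VT}"
    have finS: "finite S" "S \<noteq> {}" unfolding S_def by auto
    have "Max S \<in> S" using Max_in[OF finS] .
    then obtain \<alpha>0 where a0': "\<alpha>0 \<in> {0..card VT}" "Max S = hh VT AT \<sigma> \<alpha>0"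
      unfolding S_def by (rule imageE) auto
    then have a0: "\<alpha>0 \<in> {0..card VT}" "hh VT AT \<sigma> \<alpha>0 = Max S" by auto
    have a0n: "\<alpha>0 \<le> card VT" using a0 by simp
    have amax: "\<And>\<alpha>. \<alpha> \<le> card VT \<Longrightarrow> hh VT AT \<sigma> \<alpha> \<le> hh VT AT \<sigma> \<alpha>0"
      using a0(2) finS(1) unfolding S_def by simp
    have big: "200 * N * N < hh VT AT \<sigma> \<alpha>0" using amax[OF a1(1)] a1(2) by simp
    have apos: "0 < hh VT AT \<sigma> \<alpha>0" using big by simp
    obtain X where X: "X \<subseteq> VT" "card X = N" "robust AT X (4 * N)"
    proof (cases "N = 0")
      case True
      have "robust AT {} (4 * N)" unfolding robust_def by simp
      moreover have "{} \<subseteq> VT" "card {} = N" using True by auto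
      ultimately show ?thesis using that by blast
    next
      case False
      then have "1 \<le> N" by simp
      then show ?thesis using mainlem[OF tour bij mono a0n amax apos _ big] that by blast
    qed
    have finX: "finite X" using finite_subset[OF X(1) finVT] .
    have c1: "k * card VH \<le> card X" using X(2) unfolding N_def size_dg_def by (simp add: algebra_simps)
    have c2: "4 * (k * card AH) \<le> 4 * N" unfolding N_def size_dg_def by (simp add: algebra_simps)
    have "has_disjoint_immersions k VH AH VT AT"
      using build_immersions[OF sd tour X(1) finX c1 X(3) c2] .
    then show False using nh by simp
  qed
  have ow: "ordering_width VT AT \<sigma> \<le> 200 * N * N"
    unfolding ordering_width_def using allb by (intro Max.boundedI) auto
  have finA: "finite AT" using finA[OF tour] .
  have "{ordering_width VT AT \<tau> | \<tau>. bij_betw \<tau> VT {1..card VT}} \<subseteq> {0..card AT}"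
  proof
    fix x assume "x \<in> {ordering_width VT AT \<tau> | \<tau>. bij_betw \<tau> VT {1..card VT}}"
    then obtain \<tau> where x: "x = ordering_width VT AT \<tau>" by auto
    have "\<forall>\<alpha>\<in>{0..card VT}. card (cut_at AT \<tau> \<alpha>) \<le> card AT"
      unfolding cut_at_def using finA by (auto intro: card_mono)
    then have "x \<le> card AT" unfolding x ordering_width_def by (intro Max.boundedI) auto
    then show "x \<in> {0..card AT}" by simp
  qed
  then have finW: "finite {ordering_width VT AT \<tau> | \<tau>. bij_betw \<tau> VT {1..card VT}}"
    using finite_subset by blast
  have "cutwidth VT AT \<le> ordering_width VT AT \<sigma>"
    unfolding cutwidth_def using bij finW by (intro Min_le) auto
  then show ?thesis using ow unfolding N_def by simp
qed

theorem corollary8: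
  shows "\<exists>d::real. \<forall>(VH::nat set) (AH::(nat \<times> nat) set) (k::nat) (VT::nat set) (AT::(nat \<times> nat) set).
    simple_digraph VH AH \<longrightarrow> k > 0 \<longrightarrow> tournament VT AT \<longrightarrow>
    \<not> has_disjoint_immersions k VH AH VT AT \<longrightarrow>
    real (cutwidth VT AT) \<le> d * (real (size_dg VH AH))^2 * (real k)^2"
proof (intro exI allI impI)
  fix VH :: "nat set" and AH :: "(nat \<times> nat) set" and k :: nat and VT :: "nat set" and AT :: "(nat \<times> nat) set"
  assume sd: "simple_digraph VH AH" and "k > 0" and tour: "tournament VT AT"
    and nh: "\<not> has_disjoint_immersions k VH AH VT AT"
  have "cutwidth VT AT \<le> 200 * (k * size_dg VH AH) * (k * size_dg VH AH)"
    by (rule width_bound[OF sd tour nh])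
  then have "real (cutwidth VT AT) \<le> real (200 * (k * size_dg VH AH) * (k * size_dg VH AH))"
    by (simp only: of_nat_le_iff)
  then show "real (cutwidth VT AT) \<le> 200 * (real (size_dg VH AH))^2 * (real k)^2"
    by (simp add: power2_eq_square algebra_simps)
qed


end
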